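(* Let $G\leq \mathrm{Aut}(X^* )$, $H\le G$ and $k\ge 0$. If $T:=\{v\in X^k : \psi_v(H)\text{ is finite}\}$ is non-empty, then for every $n\ge k$ the shadow $S(T,n)$ is setwise invariant under the action of $H$ on $X^n$.
   Context: $X^*$ is the free monoid on a finite set $X$, viewed as a rooted tree; $X^n$ is the set of words of length $n$; $\mathrm{Aut}(X^* )$ is the group of prefix-preserving bijections of $X^*$. For $g\in\mathrm{Aut}(X^* )$ and $u\in X^*$ the section $g_u$ is defined by $g(uw)=g(u)g_u(w)$ for all $w$, and $\psi_u(H)=\{h_u:h\in H\}$. For $T\subseteq X^k$ and $n\ge k$, the shadow of $T$ on level $n$ is $S(T,n)=\{v\in X^n: \exists t\in T,\ t \text{ is a prefix of } v\}$. *)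

theory Defs
  imports Main "HOL-Library.Sublist"
begin

text \<open>The alphabet X is the (finite) universe of the type 'a; X^* is 'a list.\<close>

definition Aut :: "('a::finite list \<Rightarrow> 'a list) set" where
  "Aut = {g. bij g \<and> (\<forall>u v. prefix u v \<longleftrightarrow> prefix (g u) (g v))}"

definition aut_subgroup :: "('a::finite list \<Rightarrow> 'a list) set \<Rightarrow> bool" where
  "aut_subgroup H \<longleftrightarrow> H \<subseteq> Aut \<and> id \<in> H \<and> (\<forall>g\<in>H. \<forall>h\<in>H. g \<circ> h \<in> H)
     \<and> (\<forall>h\<in>H. inv h \<in> H)"

text \<open>Section g_u: g(uw) = g(u) g_u(w).\<close>
definition section_at :: "('a list \<Rightarrow> 'a list) \<Rightarrow> 'a list \<Rightarrow> ('a list \<Rightarrow> 'a list)" where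
  "section_at g u = (\<lambda>w. drop (length u) (g (u @ w)))"

definition psi :: "'a list \<Rightarrow> ('a list \<Rightarrow> 'a list) set \<Rightarrow> ('a list \<Rightarrow> 'a list) set" where
  "psi u H = (\<lambda>h. section_at h u) ` H"

definition shadow :: "'a list set \<Rightarrow> nat \<Rightarrow> 'a list set" where
  "shadow T n = {v. length v = n \<and> (\<exists>t\<in>T. prefix t v)}"

end

theory Submission
  imports Defs
begin

lemma aut_pref: "g \<in> Aut \<Longrightarrow> prefix u v \<longleftrightarrow> prefix (g u) (g v)"
  unfolding Aut_def by blast

lemma aut_bij: "g \<in> Aut \<Longrightarrow> bij g"
  unfolding Aut_def by blast

lemma aut_len: assumes g: "g \<in> Aut" shows "length (g v) = length v"
proof -
  have b: "bij g" using aut_bij[OF g] .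
  have eq: "{u. prefix u (g v)} = g ` {u. prefix u v}"
  proof
    show "g ` {u. prefix u v} \<subseteq> {u. prefix u (g v)}" using aut_pref[OF g] by blast
  next
    show "{u. prefix u (g v)} \<subseteq> g ` {u. prefix u v}"
    proof
      fix u assume "u \<in> {u. prefix u (g v)}"
      moreover obtain x where "u = g x" using b by (metis bij_pointE)
      ultimately show "u \<in> g ` {u. prefix u v}" using aut_pref[OF g] by blast
    qed
  qed
  have "card {u. prefix u (g v)} = card {u. prefix u v}"
    unfolding eq by (rule card_image) (use b bij_is_inj inj_on_subset in blast)
  thus ?thesis using card_set_prefixes[of v] card_set_prefixes[of "g v"]
    unfolding set_prefixes_eq by simp
qed

lemma aut_app: assumes g: "g \<in> Aut" shows "g (v @ w) = g v @ section_at g v w"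
proof -
  have "prefix (g v) (g (v @ w))" using aut_pref[OF g, of v "v @ w"] by simp
  then obtain r where r: "g (v @ w) = g v @ r" by (auto simp: prefix_def)
  show ?thesis unfolding section_at_def r using aut_len[OF g, of v] by simp
qed

lemma sec_surj: assumes g: "g \<in> Aut" shows "surj (section_at g v)"
proof -
  have b: "bij g" using aut_bij[OF g] .
  { fix w'
    obtain x where x: "g x = g v @ w'" using b by (metis bij_pointE)
    have "prefix (g v) (g x)" using x by simp
    hence "prefix v x" using aut_pref[OF g] by blast
    then obtain w where "x = v @ w" by (auto simp: prefix_def)
    hence "section_at g v w = w'" using x aut_app[OF g, of v w] by simp
    hence "w' \<in> range (section_at g v)" by blast }
  thus ?thesis by blast
qed

lemma T_inv:
  assumes H: "aut_subgroup H" and h: "h \<in> H" and fin: "finite (psi v H)"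
  shows "finite (psi (h v) H)"
proof -
  have hA: "h \<in> Aut" using H h unfolding aut_subgroup_def by blast
  let ?s = "section_at h v"
  have sur: "surj ?s" using sec_surj[OF hA] .
  have inj: "inj_on (\<lambda>f. f \<circ> ?s) (psi (h v) H)"
  proof (rule inj_onI)
    fix f1 f2 assume e: "f1 \<circ> ?s = f2 \<circ> ?s"
    show "f1 = f2"
    proof
      fix y
      obtain w where "y = ?s w" using sur by blast
      thus "f1 y = f2 y" using fun_cong[OF e, of w] by simp
    qed
  qed
  have sub: "(\<lambda>f. f \<circ> ?s) ` psi (h v) H \<subseteq> psi v H"
  proof
    fix F assume "F \<in> (\<lambda>f. f \<circ> ?s) ` psi (h v) H"
    then obtain g where g: "g \<in> H" and F: "F = section_at g (h v) \<circ> ?s"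
      unfolding psi_def by auto
    have gA: "g \<in> Aut" using H g unfolding aut_subgroup_def by blast
    have gh: "g \<circ> h \<in> H" using H g h unfolding aut_subgroup_def by blast
    have "section_at (g \<circ> h) v = F"
    proof
      fix w
      have "(g \<circ> h) (v @ w) = g (h v @ ?s w)" using aut_app[OF hA] by simp
      also have "\<dots> = g (h v) @ section_at g (h v) (?s w)" using aut_app[OF gA] by simp
      finally show "section_at (g \<circ> h) v w = F w"
        unfolding F by (simp add: section_at_def aut_len[OF gA] aut_len[OF hA])
    qed
    thus "F \<in> psi v H" using gh unfolding psi_def by blast
  qed
  show ?thesis using finite_imageD[OF finite_subset[OF sub fin] inj] .
qed

lemma shadow_sub:
  assumes H: "aut_subgroup H" and h: "h \<in> H"
    and T: "T = {v. length v = k \<and> finite (psi v H)}"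
  shows "h ` shadow T n \<subseteq> shadow T n"
proof
  have hA: "h \<in> Aut" using H h unfolding aut_subgroup_def by blast
  fix y assume "y \<in> h ` shadow T n"
  then obtain x t where y: "y = h x" and x: "length x = n" and t: "t \<in> T" "prefix t x"
    unfolding shadow_def by auto
  have "length t = k" "finite (psi t H)" using t T by auto
  hence "h t \<in> T" using T_inv[OF H h, of t] aut_len[OF hA, of t] T by simp
  moreover have "prefix (h t) y" using t(2) y aut_pref[OF hA, of t x] by simp
  ultimately show "y \<in> shadow T n" using x y aut_len[OF hA, of x] unfolding shadow_def by blast
qed

theorem lemma4p2:
  fixes G H :: "('a::finite list \<Rightarrow> 'a list) set" and k n :: nat and T :: "'a list set"
  assumes "aut_subgroup G" and "aut_subgroup H" and "H \<subseteq> G"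
    and "T = {v. length v = k \<and> finite (psi v H)}"
    and "T \<noteq> {}" and "n \<ge> k"
  shows "\<forall>h\<in>H. h ` shadow T n = shadow T n"
proof
  fix h assume h: "h \<in> H"
  have hA: "h \<in> Aut" using assms(2) h unfolding aut_subgroup_def by blast
  have ih: "inv h \<in> H" using assms(2) h unfolding aut_subgroup_def by blast
  have 1: "h ` shadow T n \<subseteq> shadow T n" using shadow_sub[OF assms(2) h assms(4)] .
  have 2: "inv h ` shadow T n \<subseteq> shadow T n" using shadow_sub[OF assms(2) ih assms(4)] .
  have "shadow T n \<subseteq> h ` shadow T n"
  proof
    fix y assume "y \<in> shadow T n"
    moreover have "h (inv h y) = y" using aut_bij[OF hA] by (simp add: bij_is_surj surj_f_inv_f)
    ultimately have "inv h y \<in> shadow T n" "y = h (inv h y)" using 2 by auto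
    thus "y \<in> h ` shadow T n" by blast
  qed
  with 1 show "h ` shadow T n = shadow T n" by blast
qed

end
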